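(* If the event $E^f(t)$ holds, then $$|I_{t-1}(\mathbf{x})-EI_{t-1}(\mathbf{x})|\le c_\alpha\beta_t^{1/2}\sigma_{t-1}(\mathbf{x})\quad\text{for all }\mathbf{x}\in\mathbb{C}_t,$$ where $c_\alpha=1.328$.
   Context: Setting: $d\ge1$, $r>0$, $C\subseteq[0,r]^d$ compact, $k$ a positive semidefinite kernel with $k(\mathbf{x},\mathbf{x}')\le1$, $k(\mathbf{x},\mathbf{x})=1$ on $C$; $f$ is a sample path of $GP(0,k)$, Lipschitz with constant $L\ge1/(rd)$ in $\ell_1$-norm. Noisy observations $y_i=f(\mathbf{x}_i)+\epsilon_i$, $\epsilon_i$ i.i.d. $\mathcal{N}(0,\sigma^2)$; $\mu_{t-1}$ and $\sigma_{t-1}$ are the GP posterior mean and standard deviation given the first $t-1$ observations; $\xi^+_{t-1}$ is the incumbent (BPMI $\min_{C}\mu_{t-1}$, BSPMI $\min_{i\le t-1}\mu_{t-1}(\mathbf{x}_i)$, or BOI $\min_{i\le t-1}y_i$). $I_{t-1}(\mathbf{x})=\max\{\xi^+_{t-1}-f(\mathbf{x}),0\}$, $EI_{t-1}(\mathbf{x})=(\xi^+_{t-1}-\mu_{t-1}(\mathbf{x}))\Phi(z)+\sigma_{t-1}(\mathbf{x})\phi(z)$ with $z=(\xi^+_{t-1}-\mu_{t-1}(\mathbf{x}))/\sigma_{t-1}(\mathbf{x})$, $\phi,\Phi$ standard normal pdf/cdf. $\mathbb{C}_t\subseteq C$ is finite with $|\mathbb{C}_t|=(Lrdt^2)^d$;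 with $\delta\in(0,1)$, $\pi_t=\pi^2t^2/6$, $\beta_t=2\log(8|\mathbb{C}_t|\pi_t/\delta)$. $E^f(t)$ is the event that $|f(\mathbf{x})-\mu_{t-1}(\mathbf{x})|\le\beta_t^{1/2}\sigma_{t-1}(\mathbf{x})$ for all $\mathbf{x}\in\mathbb{C}_t$. *)

theory Defs
  imports "HOL-Analysis.Analysis" "HOL-Probability.Probability" "Jordan_Normal_Form.Gauss_Jordan_Elimination"
begin

definition psd_kernel_on :: "'a set \<Rightarrow> ('a \<Rightarrow> 'a \<Rightarrow> real) \<Rightarrow> bool" where
  "psd_kernel_on S k \<longleftrightarrow> (\<forall>x\<in>S. \<forall>x'\<in>S. k x x' = k x' x) \<and>
     (\<forall>xs c. set xs \<subseteq> S \<longrightarrow>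
        (\<Sum>i<length xs. \<Sum>j<length xs. c i * c j * k (xs ! i) (xs ! j)) \<ge> 0)"

definition gram_reg :: "('a \<Rightarrow> 'a \<Rightarrow> real) \<Rightarrow> real \<Rightarrow> 'a list \<Rightarrow> real mat" where
  "gram_reg k nv xs = mat (length xs) (length xs) (\<lambda>(i,j). k (xs ! i) (xs ! j)) + nv \<cdot>\<^sub>m 1\<^sub>m (length xs)"

definition kvec :: "('a \<Rightarrow> 'a \<Rightarrow> real) \<Rightarrow> 'a list \<Rightarrow> 'a \<Rightarrow> real vec" where
  "kvec k xs x = vec (length xs) (\<lambda>i. k (xs ! i) x)"

definition post_mean :: "('a \<Rightarrow> 'a \<Rightarrow> real) \<Rightarrow> real \<Rightarrow> 'a list \<Rightarrow> real list \<Rightarrow> 'a \<Rightarrow> real" where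
  "post_mean k nv xs ys x =
     kvec k xs x \<bullet> (the (mat_inverse (gram_reg k nv xs)) *\<^sub>v vec_of_list ys)"

definition post_sd :: "('a \<Rightarrow> 'a \<Rightarrow> real) \<Rightarrow> real \<Rightarrow> 'a list \<Rightarrow> 'a \<Rightarrow> real" where
  "post_sd k nv xs x =
     sqrt (k x x - kvec k xs x \<bullet> (the (mat_inverse (gram_reg k nv xs)) *\<^sub>v kvec k xs x))"

definition BPMI :: "'a set \<Rightarrow> ('a \<Rightarrow> real) \<Rightarrow> real" where
  "BPMI C mu = Inf (mu ` C)"
definition BSPMI :: "'a list \<Rightarrow> ('a \<Rightarrow> real) \<Rightarrow> real" where
  "BSPMI xs mu = Min (mu ` set xs)"
definition BOI :: "real list \<Rightarrow> real" where
  "BOI ys = Min (set ys)"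

definition improvement :: "real \<Rightarrow> real \<Rightarrow> real" where
  "improvement xi fx = max (xi - fx) 0"

definition EI :: "real \<Rightarrow> real \<Rightarrow> real \<Rightarrow> real" where
  "EI xi mu sd = (let z = (xi - mu) / sd in
     (xi - mu) * cdf std_normal_distribution z + sd * std_normal_density z)"

definition beta_t :: "nat \<Rightarrow> real \<Rightarrow> real \<Rightarrow> real" where
  "beta_t t cardC \<delta> = 2 * ln (8 * cardC * (pi^2 * (real t)^2 / 6) / \<delta>)"

end

theory Submission imports Defs "Jordan_Normal_Form.Determinant" begin
lemma std_tail_cheb:
  fixes w a :: real assumes "a > 0"
  shows "measure std_normal_distribution {x. \<bar>x - w\<bar> \<ge> a} \<le> (1 + w^2) / a^2"
proof -
  interpret real_distribution std_normal_distribution by (rule real_dist_normal_dist)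
  have space_eq_UNIV: "space std_normal_distribution = UNIV" by simp
  have i2: "integrable std_normal_distribution (\<lambda>x. x^2)"
    using integrable_std_normal_distribution_moment by blast
  have i1: "integrable std_normal_distribution (\<lambda>x. x^1)"
    using integrable_std_normal_distribution_moment by blast
  have e2: "(LINT x|std_normal_distribution. x^2) = 1"
    using std_normal_distribution_even_moments(1)[of 1] by simp
  have e1: "(LINT x|std_normal_distribution. x^1) = 0"
    by (rule integral_std_normal_distribution_moment_odd) simp
  have eq: "(\<lambda>x. (x - w)^2) = (\<lambda>x. x^2 - 2 * w * x^1 + w^2)"
    by (auto simp: power2_eq_square algebra_simps)
  have int: "integrable std_normal_distribution (\<lambda>x. (x - w)^2)"
    unfolding eq using i1 i2 by auto
  have val: "(LINT x|std_normal_distribution. (x - w)^2) = 1 + w^2"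
  proof -
    have pu: "measure std_normal_distribution UNIV = 1" using prob_space by simp
    show ?thesis unfolding eq using i1 i2 e1 e2 pu by simp
  qed
  have meas: "(\<lambda>x. x - w) \<in> borel_measurable std_normal_distribution" by simp
  have "measure std_normal_distribution {x\<in>space std_normal_distribution. \<bar>x - w\<bar> \<ge> a}
     \<le> (LINT x|std_normal_distribution. (x - w)^2) / a^2"
    by (rule second_moment_method[OF meas int assms])
  then show ?thesis using val by simp
qed

lemma t1: "z > (0::real) \<Longrightarrow> {z<..} \<subseteq> {x. z + 1/z \<le> \<bar>x - (- 1/z)\<bar>}"
proof
  fix x assume z: "z > 0" and "x \<in> {z<..}"
  then have "x > z" by simp
  moreover have "1/z > 0" using z by simp
  ultimately show "x \<in> {x. z + 1/z \<le> \<bar>x - (- 1/z)\<bar>}" by simp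
qed
lemma t2: "u > (0::real) \<Longrightarrow> {..-u} \<subseteq> {x. u + 1/u \<le> \<bar>x - 1/u\<bar>}"
proof
  fix x assume u: "u > 0" and "x \<in> {..-u}"
  then have "x \<le> -u" by simp
  moreover have "1/u > 0" using u by simp
  ultimately show "x \<in> {x. u + 1/u \<le> \<bar>x - 1/u\<bar>}" by simp
qed
lemma t3: "{x. (a::real) \<le> \<bar>x - w\<bar>} \<in> sets std_normal_distribution"
  by simp
lemma t4: "1 - cdf std_normal_distribution z = measure std_normal_distribution {z<..}"
proof -
  interpret real_distribution std_normal_distribution by (rule real_dist_normal_dist)
  have "{..z} \<in> sets std_normal_distribution" by simp
  then have "measure std_normal_distribution (space std_normal_distribution - {..z}) = 1 - measure std_normal_distribution {..z}"
    by (rule prob_compl)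
  moreover have "space std_normal_distribution - {..z} = {z<..}" by auto
  ultimately show ?thesis by (simp add: cdf_def)
qed

lemma frac_lemma: "(A::real) > 0 \<Longrightarrow> A/A^2 = 1/A"
  by (simp add: power2_eq_square)

lemma std_right_tail:
  fixes z :: real assumes "z > 0"
  shows "z * (1 - cdf std_normal_distribution z) \<le> 1/2"
proof -
  interpret real_distribution std_normal_distribution by (rule real_dist_normal_dist)
  have "1 - cdf std_normal_distribution z = measure std_normal_distribution {z<..}"
    by (rule t4)
  also have "\<dots> \<le> measure std_normal_distribution {x. \<bar>x - (- 1/z)\<bar> \<ge> z + 1/z}"
    by (rule finite_measure_mono[OF t1[OF assms] t3])
  also have "\<dots> \<le> (1 + (-1/z)^2) / (z + 1/z)^2"
    using assms by (intro std_tail_cheb add_pos_pos) auto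
  also have "\<dots> = 1 / (1 + z^2)"
  proof -
    have "(z + 1/z)^2 = (1+z^2)^2 / z^2" "1 + (-1/z)^2 = (1+z^2)/z^2"
      using assms by (simp_all add: field_simps power2_eq_square)
    moreover have "(1+z^2) > 0" by (simp add: add_pos_nonneg)
    ultimately show ?thesis using assms by (simp add: frac_lemma)
  qed
  finally have h: "1 - cdf std_normal_distribution z \<le> 1 / (1 + z^2)" .
  have "z * (1 - cdf std_normal_distribution z) \<le> z * (1 / (1 + z^2))"
    using h assms by (intro mult_left_mono) auto
  also have "\<dots> \<le> 1/2"
  proof -
    have "2 * z \<le> 1 + z^2" using sum_squares_ge_zero[of "z - 1" 0]
      by (simp add: power2_eq_square algebra_simps)
    moreover have "1 + z^2 > 0" by (simp add: add_pos_nonneg)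
    ultimately show ?thesis by (simp add: field_simps)
  qed
  finally show ?thesis .
qed

lemma std_left_tail:
  fixes z :: real assumes "z < 0"
  shows "(- z) * cdf std_normal_distribution z \<le> 1/2"
proof -
  interpret real_distribution std_normal_distribution by (rule real_dist_normal_dist)
  define u where "u = - z"
  have u: "u > 0" using assms u_def by simp
  have "cdf std_normal_distribution z = measure std_normal_distribution {..z}"
    by (simp add: cdf_def)
  also have "\<dots> \<le> measure std_normal_distribution {x. \<bar>x - 1/u\<bar> \<ge> u + 1/u}"
    using finite_measure_mono[OF t2[OF u] t3] by (simp add: u_def)
  also have "\<dots> \<le> (1 + (1/u)^2) / (u + 1/u)^2"
    using u by (intro std_tail_cheb add_pos_pos) auto
  also have "\<dots> = 1 / (1 + u^2)"
  proof -
    have "(u + 1/u)^2 = (1+u^2)^2 / u^2" "1 + (1/u)^2 = (1+u^2)/u^2"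
      using u by (simp_all add: field_simps power2_eq_square)
    moreover have "(1+u^2) > 0" by (simp add: add_pos_nonneg)
    ultimately show ?thesis using u by (simp add: frac_lemma)
  qed
  finally have h: "cdf std_normal_distribution z \<le> 1 / (1 + u^2)" .
  have "u * cdf std_normal_distribution z \<le> u * (1 / (1 + u^2))"
    using h u by (intro mult_left_mono) auto
  also have "\<dots> \<le> 1/2"
  proof -
    have "2 * u \<le> 1 + u^2" using sum_squares_ge_zero[of "u - 1" 0]
      by (simp add: power2_eq_square algebra_simps)
    moreover have "1 + u^2 > 0" by (simp add: add_pos_nonneg)
    ultimately show ?thesis by (simp add: field_simps)
  qed
  finally show ?thesis by (simp add: u_def)
qed

lemma std_density_le: "std_normal_density z \<le> 1/2"
proof -
  have e: "exp (- z\<^sup>2 / 2) \<le> 1" by simp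
  have s2: "sqrt (2 * pi) \<ge> 2"
  proof -
    have "(2::real)^2 \<le> 2 * pi" using pi_gt3 by simp
    then show ?thesis by (rule real_le_rsqrt)
  qed
  have i: "1 / sqrt (2 * pi) \<le> 1 / 2"
    using s2 by (intro divide_left_mono) auto
  have "(1 / sqrt (2 * pi)) * exp (- z\<^sup>2 / 2) \<le> (1/2) * 1"
    using i e by (intro mult_mono) auto
  then show ?thesis unfolding std_normal_density_def by simp
qed

lemma gram_carrier: "gram_reg k s X \<in> carrier_mat (length X) (length X)"
  unfolding gram_reg_def by simp

lemma gram_apply:
  assumes v: "v \<in> carrier_vec (length X)" and i: "i < length X"
  shows "(gram_reg k s X *\<^sub>v v) $ i = (\<Sum>j<length X. k (X!i) (X!j) * v$j) + s * v$i"
proof -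
  let ?n = "length X"
  have G: "gram_reg k s X \<in> carrier_mat ?n ?n" by (rule gram_carrier)
  have "(gram_reg k s X *\<^sub>v v) $ i = (\<Sum>j<?n. gram_reg k s X $$ (i,j) * v$j)"
    using v i G by (simp add: scalar_prod_def lessThan_atLeast0)
  also have "\<dots> = (\<Sum>j<?n. k (X!i) (X!j) * v$j + (if i = j then s * v$j else 0))"
    by (rule sum.cong) (use i in \<open>auto simp: gram_reg_def algebra_simps\<close>)
  also have "\<dots> = (\<Sum>j<?n. k (X!i) (X!j) * v$j) + (\<Sum>j<?n. (if i = j then s * v$j else 0))"
    by (rule sum.distrib)
  also have "(\<Sum>j<?n. (if i = j then s * v$j else 0)) = s * v$i"
    using i by (simp add: sum.delta)
  finally show ?thesis .
qed

lemma gram_quad: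
  assumes v: "v \<in> carrier_vec (length X)"
  shows "v \<bullet> (gram_reg k s X *\<^sub>v v) =
     (\<Sum>i<length X. \<Sum>j<length X. v$i * v$j * k (X!i) (X!j)) + s * (\<Sum>i<length X. v$i^2)"
proof -
  let ?n = "length X"
  have "v \<bullet> (gram_reg k s X *\<^sub>v v) = (\<Sum>i<?n. v$i * ((\<Sum>j<?n. k (X!i) (X!j) * v$j) + s * v$i))"
    unfolding scalar_prod_def using gram_carrier[of k s X]
    by (simp add: lessThan_atLeast0 gram_apply[OF v] del: index_mult_mat_vec)
  also have "\<dots> = (\<Sum>i<?n. \<Sum>j<?n. v$i * v$j * k (X!i) (X!j)) + s * (\<Sum>i<?n. v$i^2)"
    by (simp add: distrib_left sum.distrib sum_distrib_left power2_eq_square mult_ac)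
  finally show ?thesis .
qed

lemma psd_X:
  assumes "psd_kernel_on C k" "set X \<subseteq> C"
  shows "(\<Sum>i<length X. \<Sum>j<length X. c i * c j * k (X!i) (X!j)) \<ge> 0"
  using assms unfolding psd_kernel_on_def by blast

lemma gram_inv:
  assumes psd: "psd_kernel_on C k" and X: "set X \<subseteq> C" and s: "s > 0"
  obtains B where "mat_inverse (gram_reg k s X) = Some B"
    "gram_reg k s X * B = 1\<^sub>m (length X)" "B * gram_reg k s X = 1\<^sub>m (length X)"
    "B \<in> carrier_mat (length X) (length X)"
proof -
  let ?n = "length X" and ?G = "gram_reg k s X"
  have G: "?G \<in> carrier_mat ?n ?n" by (rule gram_carrier)
  have nz: "\<not> (\<exists>v. v \<in> carrier_vec ?n \<and> v \<noteq> 0\<^sub>v ?n \<and> ?G *\<^sub>v v = 0\<^sub>v ?n)"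
  proof
    assume "\<exists>v. v \<in> carrier_vec ?n \<and> v \<noteq> 0\<^sub>v ?n \<and> ?G *\<^sub>v v = 0\<^sub>v ?n"
    then obtain v where v: "v \<in> carrier_vec ?n" "v \<noteq> 0\<^sub>v ?n" "?G *\<^sub>v v = 0\<^sub>v ?n"
      by blast
    have "v \<bullet> (?G *\<^sub>v v) = 0" using v by simp
    then have "(\<Sum>i<?n. \<Sum>j<?n. v$i * v$j * k (X!i) (X!j)) + s * (\<Sum>i<?n. v$i^2) = 0"
      using gram_quad[OF v(1)] by simp
    moreover have "(\<Sum>i<?n. \<Sum>j<?n. v$i * v$j * k (X!i) (X!j)) \<ge> 0"
      using psd_X[OF psd X, of "\<lambda>i. v$i"] by simp
    moreover have "(\<Sum>i<?n. v$i^2) \<ge> 0" by (simp add: sum_nonneg)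
    ultimately have "s * (\<Sum>i<?n. v$i^2) = 0" using s
      by (smt (verit) mult_nonneg_nonneg)
    then have "(\<Sum>i<?n. v$i^2) = 0" using s by simp
    then have "\<forall>i\<in>{..<?n}. v$i^2 = 0" by (subst (asm) sum_nonneg_eq_0_iff) auto
    then have "v = 0\<^sub>v ?n" using v(1) by (intro eq_vecI) auto
    with v(2) show False by simp
  qed
  have dn: "Determinant.det ?G \<noteq> 0"
    using det_0_iff_vec_prod_zero[OF G] nz by simp
  have U: "?G \<in> Units (ring_mat TYPE(real) ?n ())"
    by (rule det_non_zero_imp_unit[OF G dn])
  then have "mat_inverse ?G \<noteq> None" using mat_inverse(1)[OF G, where b="()"] by blast
  then obtain B where B: "mat_inverse ?G = Some B" by auto
  then show ?thesis using that mat_inverse(2)[OF G B] by blast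
qed

lemma post_sd_pos:
  assumes psd: "psd_kernel_on C k" and X: "set X \<subseteq> C" and s: "s > 0"
    and x: "x \<in> C" and kxx: "k x x = 1"
  shows "post_sd k s X x > 0"
proof -
  let ?n = "length X" and ?G = "gram_reg k s X"
  obtain B where B: "mat_inverse ?G = Some B" "?G * B = 1\<^sub>m ?n" "B * ?G = 1\<^sub>m ?n"
      "B \<in> carrier_mat ?n ?n"
    using gram_inv[OF psd X s] by blast
  have G: "?G \<in> carrier_mat ?n ?n" by (rule gram_carrier)
  define kv where "kv = kvec k X x"
  have kv: "kv \<in> carrier_vec ?n" unfolding kv_def kvec_def by simp
  define w where "w = B *\<^sub>v kv"
  have w: "w \<in> carrier_vec ?n" unfolding w_def using B(4) kv by simp
  have Gw: "?G *\<^sub>v w = kv"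
    unfolding w_def using B G kv by (simp flip: assoc_mult_mat_vec)
  define p where "p = kv \<bullet> w"
  define q where "q = (\<Sum>i<?n. \<Sum>j<?n. w$i * w$j * k (X!i) (X!j))"
  have q0: "q \<ge> 0" unfolding q_def using psd_X[OF psd X, of "\<lambda>i. w$i"] by simp
  have pq: "p = q + s * (\<Sum>i<?n. w$i^2)"
  proof -
    have "p = w \<bullet> (?G *\<^sub>v w)" unfolding p_def Gw
      by (rule comm_scalar_prod[OF kv w])
    then show ?thesis unfolding q_def using gram_quad[OF w] by simp
  qed
  have p_sum: "p = (\<Sum>i<?n. k (X!i) x * w$i)"
    unfolding p_def kv_def kvec_def scalar_prod_def using w by (simp add: lessThan_atLeast0)
  have symm: "\<And>i. i < ?n \<Longrightarrow> k x (X!i) = k (X!i) x"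
    using psd X x unfolding psd_kernel_on_def by (meson nth_mem subsetD)
  define c where "c = (\<lambda>i. if i = 0 then 1 else - w$(i - 1))"
  have "(\<Sum>i<length (x#X). \<Sum>j<length (x#X). c i * c j * k ((x#X)!i) ((x#X)!j)) \<ge> 0"
  proof -
    have sub: "set (x#X) \<subseteq> C" using X x by simp
    show ?thesis by (rule psd_X[OF psd sub])
  qed
  also have "(\<Sum>i<length (x#X). \<Sum>j<length (x#X). c i * c j * k ((x#X)!i) ((x#X)!j))
     = k x x + (\<Sum>j<?n. - w$j * k x (X!j)) + ((\<Sum>i<?n. - w$i * k (X!i) x) + q)"
    unfolding length_Cons sum.lessThan_Suc_shift by (simp add: q_def c_def sum.distrib sum_subtractf sum_negf del: sum.lessThan_Suc)
  also have "\<dots> = 1 - 2 * p + q"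
  proof -
    have "(\<Sum>j<?n. - w$j * k x (X!j)) = - p"
      unfolding p_sum by (simp add: symm sum_negf mult_ac)
    moreover have "(\<Sum>i<?n. - w$i * k (X!i) x) = - p"
      unfolding p_sum by (simp add: sum_negf mult_ac)
    ultimately show ?thesis using kxx by simp
  qed
  finally have ineq: "0 \<le> 1 - 2 * p + q" .
  have S0: "(\<Sum>i<?n. w$i^2) \<ge> 0" by (simp add: sum_nonneg)
  have "1 - p > 0"
  proof (rule ccontr)
    assume "\<not> 1 - p > 0"
    then have "s * (\<Sum>i<?n. w$i^2) \<le> 0" using ineq pq by linarith
    then have "(\<Sum>i<?n. w$i^2) = 0" using s S0
      by (meson dual_order.antisym mult_le_0_iff not_less)
    then have "\<forall>i\<in>{..<?n}. w$i^2 = 0" by (subst (asm) sum_nonneg_eq_0_iff) auto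
    then have "p = 0" unfolding p_sum by simp
    with \<open>\<not> 1 - p > 0\<close> show False by simp
  qed
  then show ?thesis
    unfolding post_sd_def using kxx p_def kv_def w_def B(1) by simp
qed

lemma final_ineq:
  fixes a e s sb P D z :: real
  assumes s: "s > 0" and sb: "sb \<ge> 2" and e: "\<bar>e\<bar> \<le> sb * s"
    and P: "0 \<le> P" "P \<le> 1" and D: "0 \<le> D" "D \<le> 1/2" and a: "a = z * s"
    and rt: "z \<ge> 0 \<Longrightarrow> z * (1 - P) \<le> 1/2" and lt: "z < 0 \<Longrightarrow> - z * P \<le> 1/2"
  shows "\<bar>max (a - e) 0 - (a * P + s * D)\<bar> \<le> 1.328 * sb * s"
proof -
  define B where "B = sb * s"
  have slack: "0.328 * B \<ge> s / 2" unfolding B_def using sb s by (simp add: mult_right_mono)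
  have goal: "1.328 * sb * s = B + 0.328 * B" unfolding B_def by simp
  have eB: "\<bar>e\<bar> \<le> B" using e B_def by simp
  have tri: "\<And>M E. \<bar>M - E\<bar> \<le> \<bar>M - a\<bar> + \<bar>E - a\<bar>" by linarith
  show ?thesis
  proof (cases "z \<ge> 0")
    case True
    have T0: "0 \<le> z * (1 - P)" using True P by simp
    have T1: "z * (1 - P) \<le> 1/2" using rt True by simp
    have eq: "a * P + s * D - a = s * (D - z * (1 - P))" using a by (simp add: algebra_simps)
    have b1: "s * (D - z * (1 - P)) \<le> s * (1/2)" using T0 D s by (intro mult_left_mono) auto
    have b2: "s * (D - z * (1 - P)) \<ge> s * (-1/2)" using T1 D s by (intro mult_left_mono) auto
    have "a \<ge> 0" using a True s by simp
    then have m: "\<bar>max (a - e) 0 - a\<bar> \<le> B" using eB by (smt (verit))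
    have "\<bar>(a * P + s * D) - a\<bar> \<le> s/2" using eq b1 b2 by (simp add: abs_le_iff)
    then show ?thesis using tri[of "max (a - e) 0" "a * P + s * D"] m slack goal by linarith
  next
    case False
    have T0: "0 \<le> - z * P" using False P by (simp add: mult_nonpos_nonneg)
    have T1: "- z * P \<le> 1/2" using lt False by simp
    have eq: "a * P + s * D = s * (D - (- z * P))" using a by (simp add: algebra_simps)
    have b1: "s * (D - (- z * P)) \<le> s * (1/2)" using T0 D s by (intro mult_left_mono) auto
    have b2: "s * (D - (- z * P)) \<ge> s * (-1/2)" using T1 D s by (intro mult_left_mono) auto
    have "a < 0" using a False s by (simp add: mult_neg_pos)
    then have m: "\<bar>max (a - e) 0\<bar> \<le> B" using eB by (smt (verit))
    have "\<bar>(a * P + s * D)\<bar> \<le> s/2" using eq b1 b2 by (simp add: abs_le_iff)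
    then show ?thesis using m slack goal by linarith
  qed
qed

lemma beta_ge4:
  fixes c \<delta> :: real and t :: nat
  assumes "c \<ge> 1" "t \<ge> 1" "0 < \<delta>" "\<delta> < 1"
  shows "beta_t t c \<delta> \<ge> 4"
proof -
  have pi2: "pi^2 \<ge> 9" using power_mono[of 3 pi 2] pi_gt3 by simp
  have t2: "(real t)^2 \<ge> 1" using assms(2) by simp
  have "8 * c * (pi^2 * (real t)^2 / 6) \<ge> 8 * 1 * (9 * 1 / 6)"
    using assms(1) pi2 t2 by (intro mult_mono divide_right_mono) auto
  moreover have "8 * c * (pi^2 * (real t)^2 / 6) / \<delta> \<ge> 8 * c * (pi^2 * (real t)^2 / 6)"
    using assms(3,4) calculation by (simp add: le_divide_eq mult_left_le_one_le)
  ultimately have A: "8 * c * (pi^2 * (real t)^2 / 6) / \<delta> \<ge> 12" by linarith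
  have "exp (2::real) = exp 1 * exp 1" by (simp flip: exp_add)
  also have "\<dots> \<le> 3 * 3" using exp_le by (intro mult_mono) auto
  finally have "exp (2::real) \<le> 8 * c * (pi^2 * (real t)^2 / 6) / \<delta>" using A by linarith
  moreover have "(0::real) < exp 2" by simp
  ultimately have "ln (exp 2) \<le> ln (8 * c * (pi^2 * (real t)^2 / 6) / \<delta>)"
    by (subst ln_le_cancel_iff) (use A in auto)
  then show ?thesis unfolding beta_t_def by simp
qed

theorem mainTheorem16:
  fixes C :: "(real ^ 'd) set" and k :: "real ^ 'd \<Rightarrow> real ^ 'd \<Rightarrow> real"
    and f :: "real ^ 'd \<Rightarrow> real" and r L \<delta> \<sigma>n :: real and t :: nat
    and X :: "(real ^ 'd) list" and \<epsilon> :: "nat \<Rightarrow> real"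
    and Ct :: "(real ^ 'd) set" and \<xi> :: real and ys :: "real list"
  defines "d \<equiv> CARD('d)"
    and "\<mu> \<equiv> post_mean k (\<sigma>n^2) X ys"
    and "\<sigma> \<equiv> post_sd k (\<sigma>n^2) X"
    and "\<beta> \<equiv> beta_t t (real (card Ct)) \<delta>"
  assumes ys_obs: "ys = map (\<lambda>i. f (X ! i) + \<epsilon> i) [0..<length X]"
    and r_pos: "r > 0"
    and C_compact: "compact C"
    and C_box: "C \<subseteq> {x. \<forall>i. 0 \<le> x $ i \<and> x $ i \<le> r}"
    and k_psd: "psd_kernel_on C k"
    and k_le1: "\<forall>x\<in>C. \<forall>x'\<in>C. k x x' \<le> 1"
    and k_diag: "\<forall>x\<in>C. k x x = 1"
    and L_ge: "L \<ge> 1 / (r * d)"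
    and f_lip: "\<forall>x\<in>C. \<forall>x'\<in>C. \<bar>f x - f x'\<bar> \<le> L * (\<Sum>i\<in>UNIV. \<bar>x $ i - x' $ i\<bar>)"
    and noise_pos: "\<sigma>n > 0"
    and t_pos: "t \<ge> 1"
    and X_len: "length X = t - 1"
    and X_in: "set X \<subseteq> C"
    and Ct_sub: "Ct \<subseteq> C" and Ct_fin: "finite Ct"
    and Ct_card: "real (card Ct) = (L * r * d * (real t)^2) ^ d"
    and \<delta>_range: "0 < \<delta>" "\<delta> < 1"
    and incumbent: "\<xi> = BPMI C \<mu> \<or> \<xi> = BSPMI X \<mu> \<or> \<xi> = BOI ys"
    and event: "\<forall>x\<in>Ct. \<bar>f x - \<mu> x\<bar> \<le> sqrt \<beta> * \<sigma> x"
  shows "\<forall>x\<in>Ct. \<bar>improvement \<xi> (f x) - EI \<xi> (\<mu> x) (\<sigma> x)\<bar> \<le> 1.328 * sqrt \<beta> * \<sigma> x"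
proof
  fix x assume xC: "x \<in> Ct"
  have xin: "x \<in> C" using Ct_sub xC by auto
  have kxx: "k x x = 1" using k_diag xin by auto
  have sn: "\<sigma>n^2 > 0" using noise_pos by simp
  have spos: "\<sigma> x > 0" unfolding \<sigma>_def by (rule post_sd_pos[OF k_psd X_in sn xin kxx])
  have dpos: "real d \<ge> 1" unfolding d_def by (simp add: Suc_leI)
  have rd: "r * real d > 0" using r_pos dpos by simp
  have Lrd: "L * r * real d \<ge> 1"
  proof -
    have "L * (r * real d) \<ge> 1 / (r * real d) * (r * real d)"
      using L_ge rd by (intro mult_right_mono) auto
    moreover have "r \<noteq> 0" "d \<noteq> 0" using r_pos dpos by auto
    ultimately show ?thesis using rd by (simp add: mult.assoc)
  qed
  have t2: "(real t)^2 \<ge> 1" using t_pos by simp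
  have "1 * 1 \<le> L * r * real d * (real t)^2"
    using Lrd t2 by (intro mult_mono) auto
  then have base: "L * r * real d * (real t)^2 \<ge> 1" by simp
  have cardge: "real (card Ct) \<ge> 1" unfolding Ct_card using base by (rule one_le_power)
  have b4: "\<beta> \<ge> 4" unfolding \<beta>_def by (rule beta_ge4[OF cardge t_pos \<delta>_range])
  have sb: "sqrt \<beta> \<ge> 2"
  proof -
    have "sqrt 4 \<le> sqrt \<beta>" using b4 by (rule real_sqrt_le_mono)
    then show ?thesis by simp
  qed
  define z where "z = (\<xi> - \<mu> x) / \<sigma> x"
  define P where "P = cdf std_normal_distribution z"
  define D where "D = std_normal_density z"
  interpret N: real_distribution std_normal_distribution by (rule real_dist_normal_dist)
  have P01: "0 \<le> P" "P \<le> 1" unfolding P_def by (rule N.cdf_nonneg, rule N.cdf_bounded_prob)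
  have D01: "0 \<le> D" "D \<le> 1/2" unfolding D_def by (rule normal_density_nonneg, rule std_density_le)
  have a: "\<xi> - \<mu> x = z * \<sigma> x" unfolding z_def using spos by simp
  have rt: "z * (1 - P) \<le> 1/2" if "z \<ge> 0"
  proof (cases "z = 0")
    case True then show ?thesis by simp
  next
    case False then show ?thesis unfolding P_def using std_right_tail[of z] that by simp
  qed
  have lt: "- z * P \<le> 1/2" if "z < 0"
    unfolding P_def using std_left_tail[of z] that by simp
  have e: "\<bar>f x - \<mu> x\<bar> \<le> sqrt \<beta> * \<sigma> x" using event xC by auto
  have "\<bar>max ((\<xi> - \<mu> x) - (f x - \<mu> x)) 0 - ((\<xi> - \<mu> x) * P + \<sigma> x * D)\<bar> \<le> 1.328 * sqrt \<beta> * \<sigma> x"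
    by (rule final_ineq[OF spos sb e P01 D01 a rt lt])
  then show "\<bar>improvement \<xi> (f x) - EI \<xi> (\<mu> x) (\<sigma> x)\<bar> \<le> 1.328 * sqrt \<beta> * \<sigma> x"
    unfolding improvement_def EI_def Let_def z_def[symmetric] P_def[symmetric] D_def[symmetric]
    by simp
qed

end
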